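(* Let $p$ be a prime and $G$ a $p$-group of order $p^m$ with $|G/Z(G)|=p^3$. (1) If $G$ has no abelian maximal subgroup, then $$B_G(t)=\frac{1-p^{m-5}t}{(1-p^{m-2}t)(1-p^{m-3}t)}.$$ (2) If $G$ possesses an abelian maximal subgroup, then $$B_G(t)=\frac{1}{1-p^{m-3}t}\left(1+\frac{(p^{m-2}-p^{m-4})t}{1-p^{m-1}t}+\frac{(p^{m-2}-p^{m-3})t}{1-p^{m-2}t}\right).$$
   Context: For a finite group $G$ and $n\ge0$, let $G^{(n)}=\{(x_1,\dots,x_n)\in G^n: x_ix_j=x_jx_i\ \forall i,j\}$, on which $G$ acts by simultaneous conjugation; let $\beta_{G,n}$ be the number of orbits and $B_G(t)=\sum_{n\ge0}\beta_{G,n}t^n$, viewed as a rational function of $t$. *)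

theory Defs
  imports "HOL-Algebra.Algebra" "HOL-Computational_Algebra.Formal_Power_Series"
begin

definition group_center :: "('a, 'b) monoid_scheme \<Rightarrow> 'a set" where
  "group_center G = {z \<in> carrier G. \<forall>g \<in> carrier G. z \<otimes>\<^bsub>G\<^esub> g = g \<otimes>\<^bsub>G\<^esub> z}"

definition maximal_subgroup :: "'a set \<Rightarrow> ('a, 'b) monoid_scheme \<Rightarrow> bool" where
  "maximal_subgroup H G \<longleftrightarrow> subgroup H G \<and> H \<noteq> carrier G \<and>
     (\<forall>K. subgroup K G \<and> H \<subseteq> K \<and> K \<noteq> carrier G \<longrightarrow> K = H)"

definition abelian_set :: "'a set \<Rightarrow> ('a, 'b) monoid_scheme \<Rightarrow> bool" where
  "abelian_set H G \<longleftrightarrow> (\<forall>x\<in>H. \<forall>y\<in>H. x \<otimes>\<^bsub>G\<^esub> y = y \<otimes>\<^bsub>G\<^esub> x)"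

definition comm_tuples :: "('a, 'b) monoid_scheme \<Rightarrow> nat \<Rightarrow> (nat \<Rightarrow> 'a) set" where
  "comm_tuples G n = {x \<in> {..<n} \<rightarrow>\<^sub>E carrier G.
     \<forall>i<n. \<forall>j<n. x i \<otimes>\<^bsub>G\<^esub> x j = x j \<otimes>\<^bsub>G\<^esub> x i}"

definition conj_tuple :: "('a, 'b) monoid_scheme \<Rightarrow> nat \<Rightarrow> 'a \<Rightarrow> (nat \<Rightarrow> 'a) \<Rightarrow> (nat \<Rightarrow> 'a)" where
  "conj_tuple G n g x = (\<lambda>i\<in>{..<n}. g \<otimes>\<^bsub>G\<^esub> x i \<otimes>\<^bsub>G\<^esub> inv\<^bsub>G\<^esub> g)"

definition conj_orbit :: "('a, 'b) monoid_scheme \<Rightarrow> nat \<Rightarrow> (nat \<Rightarrow> 'a) \<Rightarrow> (nat \<Rightarrow> 'a) set" where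
  "conj_orbit G n x = (\<lambda>g. conj_tuple G n g x) ` carrier G"

definition beta :: "('a, 'b) monoid_scheme \<Rightarrow> nat \<Rightarrow> nat" where
  "beta G n = card (conj_orbit G n ` comm_tuples G n)"

definition B_series :: "('a, 'b) monoid_scheme \<Rightarrow> rat fps" where
  "B_series G = Abs_fps (\<lambda>n. of_nat (beta G n))"

end

theory Submission
  imports Defs "HOL-Computational_Algebra.Primes"
begin

unbundle fps_syntax

definition cz :: "('a, 'b) monoid_scheme \<Rightarrow> 'a set \<Rightarrow> 'a set" where
  "cz G S = {h \<in> carrier G. \<forall>s\<in>S. h \<otimes>\<^bsub>G\<^esub> s = s \<otimes>\<^bsub>G\<^esub> h}"

lemma (in group) cz_subgroup: "S \<subseteq> carrier G \<Longrightarrow> subgroup (cz G S) G"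
proof (rule subgroupI)
  assume S: "S \<subseteq> carrier G"
  show "cz G S \<subseteq> carrier G" unfolding cz_def by auto
  show "cz G S \<noteq> {}" unfolding cz_def using S by (auto intro!: exI[of _ "\<one>"])
  show "inv a \<in> cz G S" if a: "a \<in> cz G S" for a
  proof -
    have ac: "a \<in> carrier G" using a unfolding cz_def by auto
    { fix s assume s: "s \<in> S"
      hence sc: "s \<in> carrier G" using S by auto
      have e: "a \<otimes> s = s \<otimes> a" using a s unfolding cz_def by auto
      have "inv a \<otimes> s = inv a \<otimes> s \<otimes> a \<otimes> inv a" using ac sc by (simp add: m_assoc)
      also have "\<dots> = inv a \<otimes> (a \<otimes> s) \<otimes> inv a" using ac sc e by (simp add: m_assoc)
      also have "\<dots> = s \<otimes> inv a" using ac sc by (simp add: m_assoc[symmetric])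
      finally have "inv a \<otimes> s = s \<otimes> inv a" . }
    thus ?thesis using ac unfolding cz_def by auto
  qed
  show "a \<otimes> b \<in> cz G S" if a: "a \<in> cz G S" and b: "b \<in> cz G S" for a b
  proof -
    have ac: "a \<in> carrier G" and bc: "b \<in> carrier G" using a b unfolding cz_def by auto
    { fix s assume s: "s \<in> S"
      hence sc: "s \<in> carrier G" using S by auto
      have ea: "a \<otimes> s = s \<otimes> a" and eb: "b \<otimes> s = s \<otimes> b" using a b s unfolding cz_def by auto
      have "a \<otimes> b \<otimes> s = a \<otimes> (b \<otimes> s)" using ac bc sc by (simp add: m_assoc)
      also have "\<dots> = (a \<otimes> s) \<otimes> b" using ac bc sc eb by (simp add: m_assoc)
      also have "\<dots> = s \<otimes> (a \<otimes> b)" using ac bc sc ea by (simp add: m_assoc)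
      finally have "a \<otimes> b \<otimes> s = s \<otimes> (a \<otimes> b)" . }
    thus ?thesis using ac bc unfolding cz_def by auto
  qed
qed

lemma group_center_cz: "group_center G = cz G (carrier G)"
  unfolding group_center_def cz_def by auto

locale pg = group G for G (structure) +
  fixes p m :: nat
  assumes p_prime: "Factorial_Ring.prime p" and fin: "finite (carrier G)" and ordG: "order G = p ^ m"
    and idx: "card (rcosets (group_center G)) = p ^ 3"
begin

lemma p_gt1: "p > 1" using p_prime prime_gt_1_nat by blast

lemma pow_lt_iff: "p ^ a < p ^ b \<longleftrightarrow> a < b"
  using p_gt1 by (simp add: power_strict_increasing_iff)
lemma pow_le_iff: "p ^ a \<le> p ^ b \<longleftrightarrow> a \<le> b"
  using p_gt1 by (simp add: power_increasing_iff)
lemma pow_eq_iff: "p ^ a = p ^ b \<longleftrightarrow> a = b"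
  using p_gt1 by (simp add: power_inject_exp)

lemma cardG: "card (carrier G) = p ^ m" using ordG unfolding order_def .

lemma sub_card: assumes "subgroup H G" shows "\<exists>k\<le>m. card H = p ^ k"
proof -
  have "card (rcosets H) * card H = p ^ m" using lagrange[OF assms] ordG by simp
  hence "card H dvd p ^ m" by (metis dvd_triv_right)
  thus ?thesis using divides_primepow_nat[OF p_prime] by blast
qed

lemma sub_fin: "subgroup H G \<Longrightarrow> finite H"
  using fin subgroup.subset finite_subset by blast

lemma Z_sub: "subgroup (group_center G) G"
  using cz_subgroup[of "carrier G"] group_center_cz[of G] by simp

lemma m_ge3_cardZ: "3 \<le> m \<and> card (group_center G) = p ^ (m - 3)"
proof -
  obtain k where k: "k \<le> m" "card (group_center G) = p ^ k" using sub_card[OF Z_sub] by blast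
  have "p ^ 3 * p ^ k = p ^ m" using lagrange[OF Z_sub] ordG idx k by simp
  hence "p ^ (3 + k) = p ^ m" by (simp add: power_add)
  hence e: "3 + k = m" using pow_eq_iff by blast
  hence e2: "m - 3 = k" by linarith
  show ?thesis
  proof
    show "3 \<le> m" using e by linarith
    show "card (group_center G) = p ^ (m - 3)" using k(2) e2 by simp
  qed
qed

lemma m_ge3: "3 \<le> m" using m_ge3_cardZ by simp
lemma cardZ: "card (group_center G) = p ^ (m - 3)" using m_ge3_cardZ by simp

definition cent :: "'a \<Rightarrow> 'a set" where "cent g = cz G {g}"

lemma cent_sub: "g \<in> carrier G \<Longrightarrow> subgroup (cent g) G"
  unfolding cent_def by (rule cz_subgroup) auto

lemma cent_mem: "h \<in> cent g \<longleftrightarrow> h \<in> carrier G \<and> h \<otimes> g = g \<otimes> h"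
  unfolding cent_def cz_def by auto

lemma Z_mem: "z \<in> group_center G \<longleftrightarrow> z \<in> carrier G \<and> (\<forall>g\<in>carrier G. z \<otimes> g = g \<otimes> z)"
  unfolding group_center_def by auto

lemma Z_cent: "g \<in> carrier G \<Longrightarrow> group_center G \<subseteq> cent g"
  unfolding group_center_def cent_def cz_def by auto

lemma self_cent: "g \<in> carrier G \<Longrightarrow> g \<in> cent g" unfolding cent_mem by simp

lemma cent_central: assumes "g \<in> group_center G" shows "cent g = carrier G"
proof (intro equalityI subsetI)
  fix h assume h: "h \<in> carrier G"
  have "g \<otimes> h = h \<otimes> g" using assms h unfolding Z_mem by blast
  thus "h \<in> cent g" using h unfolding cent_mem by simp
qed (simp add: cent_mem)

lemma cent_proper: assumes "g \<in> carrier G" "g \<notin> group_center G" shows "cent g \<noteq> carrier G"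
proof
  assume c: "cent g = carrier G"
  have "g \<otimes> h = h \<otimes> g" if h: "h \<in> carrier G" for h
  proof -
    have "h \<in> cent g" using h c by simp
    thus ?thesis unfolding cent_mem by simp
  qed
  hence "g \<in> group_center G" using assms(1) unfolding Z_mem by blast
  thus False using assms(2) by contradiction
qed

lemma card_strict: "subgroup H G \<Longrightarrow> K \<subseteq> carrier G \<Longrightarrow> K \<subset> H \<Longrightarrow> card K < card H"
  by (rule psubset_card_mono) (rule sub_fin)

lemma cent_card:
  assumes g: "g \<in> carrier G" "g \<notin> group_center G"
  shows "card (cent g) = p ^ (m - 2) \<or> card (cent g) = p ^ (m - 1)"
proof -
  obtain k where k: "k \<le> m" "card (cent g) = p ^ k" using sub_card[OF cent_sub[OF g(1)]] by blast
  have "group_center G \<subset> cent g" using Z_cent[OF g(1)] self_cent[OF g(1)] g(2) by blast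
  hence "card (group_center G) < card (cent g)"
    using card_strict[OF cent_sub[OF g(1)]] Z_sub subgroup.subset by blast
  hence "m - 3 < k" using cardZ k pow_lt_iff by simp
  have "cent g \<subset> carrier G" using cent_proper[OF g] subgroup.subset[OF cent_sub[OF g(1)]] by blast
  hence "card (cent g) < card (carrier G)"
    using card_strict[OF subgroup_self] by blast
  hence "k < m" using cardG k pow_lt_iff by simp
  have "k = m - 2 \<or> k = m - 1" using \<open>m - 3 < k\<close> \<open>k < m\<close> m_ge3 by linarith
  thus ?thesis
  proof (elim disjE)
    assume "k = m - 2" thus ?thesis using k(2) by (intro disjI1) (simp only:)
  next
    assume "k = m - 1" thus ?thesis using k(2) by (intro disjI2) (simp only:)
  qed
qed

end

context pg begin

lemma cent_abelian:
  assumes g: "g \<in> carrier G" "g \<notin> group_center G" and x: "x \<in> cent g" and y: "y \<in> cent g"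
  shows "x \<otimes> y = y \<otimes> x"
proof -
  let ?C = "cent g"
  have Csub: "subgroup ?C G" using cent_sub[OF g(1)] .
  have Ccar: "?C \<subseteq> carrier G" using subgroup.subset[OF Csub] .
  define W where "W = ?C \<inter> cz G ?C"
  have Wsub: "subgroup W G" unfolding W_def
    using subgroups_Inter_pair[OF Csub cz_subgroup[OF Ccar]] .
  have ZW: "group_center G \<subset> W"
  proof
    show "group_center G \<subseteq> W" unfolding W_def
      using Z_cent[OF g(1)] Ccar unfolding group_center_def cz_def by auto
    have "g \<in> W" unfolding W_def cz_def using self_cent[OF g(1)] g(1) by (auto simp: cent_mem)
    thus "group_center G \<noteq> W" using g(2) by blast
  qed
  obtain a where a: "card W = p ^ a" using sub_card[OF Wsub] by blast
  have "card (group_center G) < card W"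
    using card_strict[OF Wsub] ZW Z_sub subgroup.subset by blast
  hence a3: "m - 3 < a" using a cardZ pow_lt_iff by simp
  show ?thesis
  proof (rule ccontr)
    assume ne: "x \<otimes> y \<noteq> y \<otimes> x"
    have xW: "x \<notin> W" using ne y unfolding W_def cz_def by auto
    have xc: "x \<in> carrier G" using x Ccar by blast
    define Cx where "Cx = ?C \<inter> cent x"
    have Cxsub: "subgroup Cx G" unfolding Cx_def
      using subgroups_Inter_pair[OF Csub cent_sub[OF xc]] .
    have WCx: "W \<subset> Cx"
    proof
      show "W \<subseteq> Cx" unfolding W_def Cx_def cz_def using x by (auto simp: cent_mem)
      have "x \<in> Cx" unfolding Cx_def using x self_cent[OF xc] by blast
      thus "W \<noteq> Cx" using xW by blast
    qed
    obtain b where b: "card Cx = p ^ b" using sub_card[OF Cxsub] by blast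
    have "card W < card Cx"
      using card_strict[OF Cxsub] WCx Wsub subgroup.subset by blast
    hence ab: "a < b" using a b pow_lt_iff by simp
    have CxC: "Cx \<subseteq> ?C" unfolding Cx_def by blast
    have finC: "finite ?C" using sub_fin[OF Csub] .
    have le1: "card Cx \<le> card ?C" using card_mono[OF finC CxC] .
    have le2: "card ?C \<le> p ^ (m - 1)" using cent_card[OF g] pow_le_iff by auto
    have "p ^ b \<le> p ^ (m - 1)" using le1 le2 b by linarith
    hence "b \<le> m - 1" using pow_le_iff by blast
    hence "b = m - 1" using ab a3 by linarith
    hence "card Cx = card ?C" using le1 le2 b by simp
    hence "Cx = ?C" using card_subset_eq[OF finC CxC] by blast
    hence CC: "?C \<subseteq> cent x" unfolding Cx_def by blast
    have "x \<otimes> s = s \<otimes> x" if s: "s \<in> ?C" for s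
      using CC s unfolding cent_mem by (metis subsetD cent_mem)
    hence "x \<in> W" unfolding W_def cz_def using x xc by auto
    thus False using xW by blast
  qed
qed

lemma max_of_card:
  assumes K: "subgroup K G" "card K = p ^ (m - 1)"
  shows "maximal_subgroup K G"
  unfolding maximal_subgroup_def
proof (intro conjI allI impI)
  show "subgroup K G" using K(1) .
  show "K \<noteq> carrier G"
  proof
    assume "K = carrier G"
    hence "p ^ (m - 1) = p ^ m" using K(2) cardG by simp
    hence "m - 1 = m" using pow_eq_iff by blast
    thus False using m_ge3 by linarith
  qed
  fix K' assume K': "subgroup K' G \<and> K \<subseteq> K' \<and> K' \<noteq> carrier G"
  obtain j where j: "card K' = p ^ j" using sub_card K' by blast
  have "K' \<subset> carrier G" using K' subgroup.subset by blast
  hence "card K' < card (carrier G)" using card_strict[OF subgroup_self] by blast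
  hence jm: "j < m" using j cardG pow_lt_iff by simp
  have finK': "finite K'" using sub_fin K' by blast
  have "card K \<le> card K'" using card_mono[OF finK'] K' by blast
  hence "m - 1 \<le> j" using K(2) j pow_le_iff by simp
  hence "j = m - 1" using jm by linarith
  hence "card K = card K'" using K(2) j by simp
  thus "K' = K" using card_subset_eq[OF finK'] K' by blast
qed

end

lemma group_action_intro:
  fixes G :: "('a, 'b) monoid_scheme" (structure)
  assumes G: "group G"
    and ext: "\<And>g. g \<in> carrier G \<Longrightarrow> \<phi> g \<in> extensional E"
    and cl: "\<And>g x. g \<in> carrier G \<Longrightarrow> x \<in> E \<Longrightarrow> \<phi> g x \<in> E"
    and hom: "\<And>g h x. g \<in> carrier G \<Longrightarrow> h \<in> carrier G \<Longrightarrow> x \<in> E \<Longrightarrow> \<phi> (g \<otimes>\<^bsub>G\<^esub> h) x = \<phi> g (\<phi> h x)"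
    and one: "\<And>x. x \<in> E \<Longrightarrow> \<phi> \<one>\<^bsub>G\<^esub> x = x"
  shows "group_action G E \<phi>"
proof -
  interpret group G by (rule G)
  have inv: "\<phi> (inv g) (\<phi> g x) = x" if "g \<in> carrier G" "x \<in> E" for g x
    using hom[of "inv g" g x] one[of x] that by simp
  have inv2: "\<phi> g (\<phi> (inv g) x) = x" if "g \<in> carrier G" "x \<in> E" for g x
    using hom[of g "inv g" x] one[of x] that by simp
  have bij: "\<phi> g \<in> Bij E" if g: "g \<in> carrier G" for g
    unfolding Bij_def
  proof
    show "\<phi> g \<in> extensional E" using ext g .
    have "bij_betw (\<phi> g) E E"
      by (rule bij_betwI[where g = "\<phi> (inv g)"]) (auto simp: g cl inv inv2)
    thus "\<phi> g \<in> {f. bij_betw f E E}" by simp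
  qed
  have homm: "\<phi> \<in> hom G (BijGroup E)"
  proof (rule homI)
    show "\<phi> x \<in> carrier (BijGroup E)" if "x \<in> carrier G" for x
      using bij that by (simp add: BijGroup_def)
    show "\<phi> (x \<otimes> y) = \<phi> x \<otimes>\<^bsub>BijGroup E\<^esub> \<phi> y" if xy: "x \<in> carrier G" "y \<in> carrier G" for x y
    proof -
      have "\<phi> x \<otimes>\<^bsub>BijGroup E\<^esub> \<phi> y = compose E (\<phi> x) (\<phi> y)"
        using bij xy by (simp add: BijGroup_def)
      also have "\<dots> = \<phi> (x \<otimes> y)"
      proof (rule extensionalityI[where A = E])
        show "compose E (\<phi> x) (\<phi> y) \<in> extensional E" by (simp add: compose_def)
        show "\<phi> (x \<otimes> y) \<in> extensional E" using ext xy by simp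
        show "compose E (\<phi> x) (\<phi> y) z = \<phi> (x \<otimes> y) z" if "z \<in> E" for z
          using that xy hom by (simp add: compose_def)
      qed
      finally show ?thesis by simp
    qed
  qed
  show ?thesis unfolding group_action_def group_hom_def group_hom_axioms_def
    using G group_BijGroup homm by blast
qed

context pg begin

lemma norm_grow:
  assumes H: "subgroup H G" "H \<noteq> carrier G"
  shows "\<exists>g\<in>carrier G. g \<notin> H \<and> (\<forall>h\<in>H. g \<otimes> h \<otimes> inv g \<in> H)"
proof -
  have Hc: "H \<subseteq> carrier G" using subgroup.subset[OF H(1)] .
  define E where "E = rcosets H"
  define Gh where "Gh = G\<lparr>carrier := H\<rparr>"
  define \<phi> where "\<phi> = (\<lambda>h. \<lambda>C\<in>E. C #> inv h)"
  have Ec: "C \<subseteq> carrier G" if "C \<in> E" for C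
    using that unfolding E_def using rcosets_part_G[OF H(1)] by blast
  have finE: "finite E" unfolding E_def
    using rcosets_subset_PowG[OF H(1)] fin by (meson finite_Pow_iff finite_subset)
  have grpGh: "group Gh" unfolding Gh_def using subgroup.subgroup_is_group[OF H(1) is_group] .
  have act: "group_action Gh E \<phi>"
  proof (rule group_action_intro[OF grpGh])
    show "\<phi> g \<in> extensional E" for g unfolding \<phi>_def by simp
    show "\<phi> g x \<in> E" if "g \<in> carrier Gh" "x \<in> E" for g x
    proof -
      obtain a where a: "a \<in> carrier G" "x = H #> a" using \<open>x \<in> E\<close> unfolding E_def RCOSETS_def by blast
      have gc: "g \<in> carrier G" using that Hc unfolding Gh_def by auto
      have "\<phi> g x = H #> (a \<otimes> inv g)" unfolding \<phi>_def using that a gc Hc by (simp add: coset_mult_assoc)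
      thus ?thesis unfolding E_def using a gc Hc by (simp add: rcosetsI)
    qed
    show "\<phi> (g \<otimes>\<^bsub>Gh\<^esub> h) x = \<phi> g (\<phi> h x)" if "g \<in> carrier Gh" "h \<in> carrier Gh" "x \<in> E" for g h x
    proof -
      have gc: "g \<in> carrier G" "h \<in> carrier G" using that Hc unfolding Gh_def by auto
      have hx: "\<phi> h x \<in> E" using \<open>\<And>g x. g \<in> carrier Gh \<Longrightarrow> x \<in> E \<Longrightarrow> \<phi> g x \<in> E\<close> that by blast
      have "\<phi> (g \<otimes>\<^bsub>Gh\<^esub> h) x = x #> inv (g \<otimes> h)" unfolding \<phi>_def Gh_def using that by simp
      also have "\<dots> = x #> (inv h \<otimes> inv g)" using gc by (simp add: inv_mult_group)
      also have "\<dots> = (x #> inv h) #> inv g" using gc Ec[OF that(3)] by (simp add: coset_mult_assoc)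
      also have "\<dots> = \<phi> g (\<phi> h x)" using that hx unfolding \<phi>_def by simp
      finally show ?thesis .
    qed
    show "\<phi> \<one>\<^bsub>Gh\<^esub> x = x" if "x \<in> E" for x
      unfolding \<phi>_def Gh_def using that Ec[OF that] by simp
  qed
  interpret A: group_action Gh E \<phi> by (rule act)
  have ordGh: "order Gh = card H" unfolding Gh_def order_def by simp
  define fx where "fx C \<longleftrightarrow> (\<forall>h\<in>H. \<phi> h C = C)" for C
  have orbH: "orbit Gh \<phi> C = (\<lambda>h. \<phi> h C) ` H" for C
    unfolding orbit_def Gh_def by auto
  have Cin: "C \<in> orbit Gh \<phi> C" if "C \<in> E" for C using A.orbit_refl that .
  have orb_dvd: "p dvd card (orbit Gh \<phi> C)" if C: "C \<in> E" "\<not> fx C" for C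
  proof -
    have "card (orbit Gh \<phi> C) dvd card H"
      using A.orbit_stabilizer_theorem[OF C(1)] ordGh by (metis dvd_triv_left)
    moreover obtain e where e: "card H = p ^ e" using sub_card[OF H(1)] by blast
    ultimately obtain i where i: "card (orbit Gh \<phi> C) = p ^ i"
      using divides_primepow_nat[OF p_prime] by auto
    obtain h where h: "h \<in> H" "\<phi> h C \<noteq> C" using C(2) unfolding fx_def by blast
    have "\<phi> h C \<in> orbit Gh \<phi> C" using orbH h by blast
    moreover have "finite (orbit Gh \<phi> C)" using orbH sub_fin[OF H(1)] by simp
    ultimately have "{C, \<phi> h C} \<subseteq> orbit Gh \<phi> C" "finite (orbit Gh \<phi> C)"
      using Cin[OF C(1)] by auto
    hence "card {C, \<phi> h C} \<le> card (orbit Gh \<phi> C)" by (intro card_mono)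
    hence "card (orbit Gh \<phi> C) \<ge> 2" using h(2) by simp
    hence "i \<noteq> 0" using i by (cases i) auto
    thus ?thesis using i by simp
  qed
  have fix_orbit: "orbit Gh \<phi> C = {C}" if C: "C \<in> E" "fx C" for C
    using C orbH subgroup.one_closed[OF H(1)] unfolding fx_def by auto
  have orb_nofix: "\<not> fx D" if C: "C \<in> E" "\<not> fx C" and D: "D \<in> orbit Gh \<phi> C" for C D
  proof
    assume fD: "fx D"
    obtain h where h: "h \<in> H" "D = \<phi> h C" using D orbH by blast
    have "\<phi> (inv h) D = C" using A.orbit_sym_aux[of h C D] h C(1) H(1) unfolding Gh_def by simp
    moreover have "inv h \<in> H" by (rule subgroup.m_inv_closed[OF H(1) h(1)])
    ultimately have "C = D" using fD unfolding fx_def by auto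
    thus False using fD C(2) by simp
  qed
  define F where "F = {C \<in> E. fx C}"
  have sumE: "card E = (\<Sum>orb\<in>orbits Gh E \<phi>. card orb)"
  proof -
    have "(\<Sum>orb\<in>orbits Gh E \<phi>. card orb) = (\<Sum>orb\<in>orbits Gh E \<phi>. \<Sum>x\<in>orb. 1)" by simp
    also have "\<dots> = (\<Sum>x\<in>E. 1)" by (rule A.disjoint_sum[OF finE])
    finally show ?thesis by simp
  qed
  have sumF: "card F = (\<Sum>orb\<in>orbits Gh E \<phi>. card {C\<in>orb. fx C})"
  proof -
    have "card F = (\<Sum>C\<in>E. if fx C then 1 else 0)" unfolding F_def using finE by (simp add: sum.If_cases Int_def)
    also have "\<dots> = (\<Sum>orb\<in>orbits Gh E \<phi>. \<Sum>C\<in>orb. if fx C then 1 else 0)"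
      by (rule A.disjoint_sum[OF finE, symmetric])
    also have "\<dots> = (\<Sum>orb\<in>orbits Gh E \<phi>. card {C\<in>orb. fx C})"
    proof (rule sum.cong[OF refl])
      fix orb assume "orb \<in> orbits Gh E \<phi>"
      hence "finite orb" using A.orbits_coverture finE by (metis Union_upper finite_subset)
      thus "(\<Sum>C\<in>orb. if fx C then 1 else 0) = card {C\<in>orb. fx C}" by (simp add: sum.If_cases Int_def)
    qed
    finally show ?thesis .
  qed
  have term_dvd: "int p dvd int (card orb) - int (card {C\<in>orb. fx C})" if orb: "orb \<in> orbits Gh E \<phi>" for orb
  proof -
    obtain C where C: "C \<in> E" "orb = orbit Gh \<phi> C" using orb unfolding orbits_def by blast
    show ?thesis
    proof (cases "fx C")
      case True
      hence "orb = {C}" using fix_orbit C by simp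
      moreover have "{D\<in>{C}. fx D} = {C}" using True by auto
      ultimately show ?thesis by simp
    next
      case False
      hence e0: "{C\<in>orb. fx C} = {}" using orb_nofix[OF C(1) False] C(2) by blast
      have "int p dvd int (card orb)" using orb_dvd[OF C(1) False] C(2) by simp
      thus ?thesis unfolding e0 by simp
    qed
  qed
  have "int p dvd (\<Sum>orb\<in>orbits Gh E \<phi>. int (card orb) - int (card {C\<in>orb. fx C}))"
    by (rule dvd_sum) (rule term_dvd)
  hence d1: "int p dvd int (card E) - int (card F)"
    using sumE sumF by (simp add: sum_subtractf of_nat_sum)
  obtain e where e: "e \<le> m" "card H = p ^ e" using sub_card[OF H(1)] by blast
  have "H \<subset> carrier G" using H Hc by blast
  hence "card H < card (carrier G)" using card_strict[OF subgroup_self] by blast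
  hence em: "e < m" using e cardG pow_lt_iff by simp
  have "card E * p ^ e = p ^ m" using lagrange[OF H(1)] ordG e unfolding E_def by simp
  moreover have "p ^ m = p ^ (m - e) * p ^ e" using em by (simp add: power_add[symmetric])
  ultimately have "card E * p ^ e = p ^ (m - e) * p ^ e" by simp
  hence "card E = p ^ (m - e)" using p_gt1 by simp
  hence "p dvd card E" using em by simp
  hence "int p dvd int (card E)" by simp
  hence "int p dvd int (card E) - (int (card E) - int (card F))" using d1 by (rule dvd_diff)
  hence "int p dvd int (card F)" by simp
  hence pF: "p dvd card F" by simp
  have HE: "H \<in> E" unfolding E_def using rcosetsI[OF Hc one_closed] Hc by simp
  have "H #> inv h = H" if h: "h \<in> H" for h
    using coset_join2[OF inv_closed[OF subgroup.mem_carrier[OF H(1) h]] H(1) subgroup.m_inv_closed[OF H(1) h]] .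
  hence HF: "H \<in> F" unfolding F_def fx_def \<phi>_def using HE by simp
  have finF: "finite F" unfolding F_def using finE by simp
  have "card F \<noteq> 0" using HF finF by auto
  hence "card F \<ge> p" using pF by (simp add: dvd_imp_le)
  hence "card F \<ge> 2" using p_gt1 by linarith
  have "\<exists>C\<in>F. C \<noteq> H"
  proof (rule ccontr)
    assume "\<not> (\<exists>C\<in>F. C \<noteq> H)"
    hence "F \<subseteq> {H}" by blast
    hence "card F \<le> 1" using card_mono[of "{H}" F] by simp
    thus False using \<open>card F \<ge> 2\<close> by simp
  qed
  then obtain C where C: "C \<in> F" "C \<noteq> H" by blast
  obtain g where g: "g \<in> carrier G" "C = H #> g" using C(1) unfolding F_def E_def RCOSETS_def by blast
  have gH: "g \<notin> H" using g C(2) coset_join2[OF g(1) H(1)] by auto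
  have "g \<otimes> h \<otimes> inv g \<in> H" if h: "h \<in> H" for h
  proof -
    have hc: "h \<in> carrier G" using h Hc by blast
    have ih: "inv h \<in> H" by (rule subgroup.m_inv_closed[OF H(1) h])
    have "\<phi> (inv h) C = C" using C(1) ih unfolding F_def fx_def by blast
    hence "C #> inv (inv h) = C" unfolding \<phi>_def using C(1) unfolding F_def by simp
    hence "H #> (g \<otimes> h) = H #> g" using g hc Hc by (simp add: coset_mult_assoc)
    hence "H #> ((g \<otimes> h) \<otimes> inv g) = H" using coset_mult_inv2 g hc Hc by simp
    thus ?thesis using coset_join1[OF _ _ H(1)] g hc by simp
  qed
  thus ?thesis using g gH by blast
qed

end

context pg begin

lemma cancel_l1 [simp]: "x \<in> carrier G \<Longrightarrow> y \<in> carrier G \<Longrightarrow> inv x \<otimes> (x \<otimes> y) = y"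
  by (simp add: m_assoc[symmetric])
lemma cancel_l2 [simp]: "x \<in> carrier G \<Longrightarrow> y \<in> carrier G \<Longrightarrow> x \<otimes> (inv x \<otimes> y) = y"
  by (simp add: m_assoc[symmetric])

lemma pow_escape:
  assumes H: "subgroup H G" and y0: "y0 \<in> carrier G" "y0 \<notin> H"
  shows "\<exists>y\<in>carrier G. y \<notin> H \<and> y [^] p \<in> H"
proof -
  have step: "y0 [^] (p ^ k) \<in> H \<Longrightarrow> \<exists>y\<in>carrier G. y \<notin> H \<and> y [^] p \<in> H" for k
  proof (induction k)
    case 0
    thus ?case using y0 by simp
  next
    case (Suc k)
    show ?case
    proof (cases "y0 [^] (p ^ k) \<in> H")
      case True thus ?thesis using Suc.IH by blast
    next
      case False
      have "(y0 [^] (p ^ k)) [^] p = y0 [^] (p ^ Suc k)"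
        using y0(1) by (simp add: nat_pow_pow power_Suc2 mult.commute)
      thus ?thesis using False Suc.prems y0(1) by (intro bexI[of _ "y0 [^] (p ^ k)"]) auto
    qed
  qed
  have "y0 [^] (p ^ m) = \<one>" using pow_order_eq_1[OF y0(1)] ordG by simp
  thus ?thesis using step[of m] subgroup.one_closed[OF H] by simp
qed

lemma max_index:
  assumes M: "maximal_subgroup H G"
  shows "card H = p ^ (m - 1)"
proof -
  have H: "subgroup H G" and Hne: "H \<noteq> carrier G"
    and mx: "\<And>K. subgroup K G \<Longrightarrow> H \<subseteq> K \<Longrightarrow> K \<noteq> carrier G \<Longrightarrow> K = H"
    using M unfolding maximal_subgroup_def by blast+
  have Hc: "H \<subseteq> carrier G" using subgroup.subset[OF H] .
  have finH: "finite H" using sub_fin[OF H] .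
  obtain e where e: "e \<le> m" "card H = p ^ e" using sub_card[OF H] by blast
  have "H \<subset> carrier G" using Hne Hc by blast
  hence "card H < card (carrier G)" using card_strict[OF subgroup_self] by blast
  hence em: "e < m" using e cardG pow_lt_iff by simp
  show ?thesis
  proof (rule ccontr)
    assume ne: "card H \<noteq> p ^ (m - 1)"
    hence em2: "Suc e < m" using em e by (metis Suc_lessI diff_Suc_1)
    obtain g0 where g0: "g0 \<in> carrier G" "g0 \<notin> H" "\<forall>h\<in>H. g0 \<otimes> h \<otimes> inv g0 \<in> H"
      using norm_grow[OF H Hne] by blast
    define N where "N = {g \<in> carrier G. \<forall>h\<in>H. g \<otimes> h \<otimes> inv g \<in> H \<and> inv g \<otimes> h \<otimes> g \<in> H}"
    have Nsub: "subgroup N G"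
    proof (rule subgroupI)
      show "N \<subseteq> carrier G" unfolding N_def by blast
      show "N \<noteq> {}" unfolding N_def using Hc by (auto intro!: exI[of _ \<one>] simp: subset_iff)
      show "inv a \<in> N" if a: "a \<in> N" for a
        using a Hc unfolding N_def by (auto simp: subset_iff)
      show "a \<otimes> b \<in> N" if a: "a \<in> N" and b: "b \<in> N" for a b
      proof -
        have ac: "a \<in> carrier G" and bc: "b \<in> carrier G" using a b unfolding N_def by auto
        have "a \<otimes> b \<otimes> h \<otimes> inv (a \<otimes> b) \<in> H \<and> inv (a \<otimes> b) \<otimes> h \<otimes> (a \<otimes> b) \<in> H" if h: "h \<in> H" for h
        proof -
          have hc: "h \<in> carrier G" using h Hc by blast
          have 1: "b \<otimes> h \<otimes> inv b \<in> H" "inv a \<otimes> h \<otimes> a \<in> H" using a b h unfolding N_def by auto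
          have 2: "a \<otimes> (b \<otimes> h \<otimes> inv b) \<otimes> inv a \<in> H" "inv b \<otimes> (inv a \<otimes> h \<otimes> a) \<otimes> b \<in> H"
            using a b 1 unfolding N_def by auto
          have "a \<otimes> b \<otimes> h \<otimes> inv (a \<otimes> b) = a \<otimes> (b \<otimes> h \<otimes> inv b) \<otimes> inv a"
            using ac bc hc by (simp add: inv_mult_group m_assoc)
          moreover have "inv (a \<otimes> b) \<otimes> h \<otimes> (a \<otimes> b) = inv b \<otimes> (inv a \<otimes> h \<otimes> a) \<otimes> b"
            using ac bc hc by (simp add: inv_mult_group m_assoc)
          ultimately show ?thesis using 2 by simp
        qed
        thus ?thesis unfolding N_def using ac bc by auto
      qed
    qed
    have HN: "H \<subseteq> N"
    proof
      fix x assume x: "x \<in> H"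
      have xc: "x \<in> carrier G" using x Hc by blast
      have "x \<otimes> h \<otimes> inv x \<in> H \<and> inv x \<otimes> h \<otimes> x \<in> H" if h: "h \<in> H" for h
        using x h H by (simp add: subgroup.m_closed subgroup.m_inv_closed)
      thus "x \<in> N" unfolding N_def using xc by auto
    qed
    have g0N: "g0 \<in> N"
    proof -
      let ?f = "\<lambda>h. g0 \<otimes> h \<otimes> inv g0"
      have sub: "?f ` H \<subseteq> H" using g0(3) by blast
      have inj: "inj_on ?f H"
      proof (rule inj_onI)
        fix a b assume ab: "a \<in> H" "b \<in> H" "?f a = ?f b"
        show "a = b"
          by (rule conjugation_is_inj[OF g0(1) subgroup.mem_carrier[OF H ab(1)] subgroup.mem_carrier[OF H ab(2)] ab(3)])
      qed
      have fH: "?f ` H = H" by (rule endo_inj_surj[OF finH sub inj])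
      have "inv g0 \<otimes> h \<otimes> g0 \<in> H" if h: "h \<in> H" for h
      proof -
        obtain h' where h': "h' \<in> H" "h = g0 \<otimes> h' \<otimes> inv g0" using h fH by blast
        have h'c: "h' \<in> carrier G" using h' Hc by blast
        have "inv g0 \<otimes> h \<otimes> g0 = h'" using h'(2) g0(1) h'c by (simp add: m_assoc)
        thus ?thesis using h' by simp
      qed
      thus ?thesis unfolding N_def using g0 by auto
    qed
    have Nall: "N = carrier G"
    proof (rule ccontr)
      assume "N \<noteq> carrier G"
      hence "N = H" using mx[OF Nsub HN] by blast
      thus False using g0N g0(2) by blast
    qed
    have nrm: "\<And>g h. g \<in> carrier G \<Longrightarrow> h \<in> H \<Longrightarrow> g \<otimes> h \<otimes> inv g \<in> H"
      using Nall unfolding N_def by blast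
    obtain y0 where y0: "y0 \<in> carrier G" "y0 \<notin> H" using Hne Hc by blast
    obtain y where y: "y \<in> carrier G" "y \<notin> H" "y [^] p \<in> H" using pow_escape[OF H y0] by blast
    define K where "K = {g \<in> carrier G. \<exists>i::int. g \<otimes> inv (y [^] i) \<in> H}"
    have Ksub: "subgroup K G"
    proof (rule subgroupI)
      show "K \<subseteq> carrier G" unfolding K_def by blast
      show "K \<noteq> {}" unfolding K_def using subgroup.one_closed[OF H]
        by (auto intro!: exI[of _ \<one>] exI[of _ "0::int"])
      show "inv a \<in> K" if a: "a \<in> K" for a
      proof -
        obtain i :: int where ac: "a \<in> carrier G" and i: "a \<otimes> inv (y [^] i) \<in> H" using a unfolding K_def by blast
        let ?b = "y [^] i"
        have bc: "?b \<in> carrier G" using y(1) by simp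
        have "inv (a \<otimes> inv ?b) \<in> H" by (rule subgroup.m_inv_closed[OF H i])
        hence "inv ?b \<otimes> inv (a \<otimes> inv ?b) \<otimes> inv (inv ?b) \<in> H" using nrm[OF inv_closed[OF bc]] by blast
        moreover have "inv ?b \<otimes> inv (a \<otimes> inv ?b) \<otimes> inv (inv ?b) = inv a \<otimes> inv (y [^] (- i))"
          using ac bc y(1) by (simp add: int_pow_neg inv_mult_group m_assoc)
        ultimately show ?thesis unfolding K_def using ac by auto
      qed
      show "a \<otimes> b \<in> K" if a: "a \<in> K" and b: "b \<in> K" for a b
      proof -
        obtain i :: int where ac: "a \<in> carrier G" and i: "a \<otimes> inv (y [^] i) \<in> H" using a unfolding K_def by blast
        obtain j :: int where bc: "b \<in> carrier G" and j: "b \<otimes> inv (y [^] j) \<in> H" using b unfolding K_def by blast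
        let ?u = "y [^] i" and ?v = "y [^] j"
        have uc: "?u \<in> carrier G" and vc: "?v \<in> carrier G" using y(1) by simp_all
        have 1: "?u \<otimes> (b \<otimes> inv ?v) \<otimes> inv ?u \<in> H" by (rule nrm[OF uc j])
        have 2: "(a \<otimes> inv ?u) \<otimes> (?u \<otimes> (b \<otimes> inv ?v) \<otimes> inv ?u) \<in> H"
          by (rule subgroup.m_closed[OF H i 1])
        have "(a \<otimes> inv ?u) \<otimes> (?u \<otimes> (b \<otimes> inv ?v) \<otimes> inv ?u) = (a \<otimes> b) \<otimes> inv (y [^] (i + j))"
          using ac bc uc vc y(1) by (simp add: int_pow_mult inv_mult_group m_assoc)
        thus ?thesis using 2 unfolding K_def using ac bc by auto
      qed
    qed
    have HK: "H \<subseteq> K" unfolding K_def using Hc by (auto intro!: exI[of _ "0::int"])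
    have yK: "y \<in> K" unfolding K_def using y(1) subgroup.one_closed[OF H]
      by (auto intro!: exI[of _ "1::int"])
    have KU: "K \<subseteq> (\<Union>r\<in>{..<p}. H #> (y [^] r))"
    proof
      fix g assume g: "g \<in> K"
      obtain i :: int where gc: "g \<in> carrier G" and i: "g \<otimes> inv (y [^] i) \<in> H" using g unfolding K_def by blast
      define q where "q = i div int p"
      define r where "r = i mod int p"
      have p0: "int p > 0" using p_gt1 by simp
      have r0: "0 \<le> r" "r < int p" unfolding r_def using p0 by simp_all
      have iqr: "i = int p * q + r" unfolding q_def r_def by simp
      define Y where "Y = (y [^] p) [^] q"
      have YH: "Y \<in> H" unfolding Y_def using subgroup_int_pow_closed[OF H y(3)] .
      have Yc: "Y \<in> carrier G" using YH Hc by blast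
      have "y [^] i = Y \<otimes> y [^] r" unfolding Y_def iqr using y(1)
        by (simp add: int_pow_mult int_pow_pow int_pow_int[symmetric])
      hence "g \<otimes> inv (y [^] r) = (g \<otimes> inv (y [^] i)) \<otimes> Y"
        using gc Yc y(1) by (simp add: inv_mult_group m_assoc)
      hence "g \<otimes> inv (y [^] r) \<in> H" using subgroup.m_closed[OF H i YH] by simp
      moreover have "y [^] r = y [^] (nat r)" using r0 int_pow_int[of G y "nat r"] by simp
      ultimately have "g \<otimes> inv (y [^] (nat r)) \<in> H" by simp
      hence "g \<in> H #> (y [^] (nat r))"
        using subgroup.rcos_module_rev[OF H is_group _ gc] y(1) by simp
      moreover have "nat r \<in> {..<p}" using r0 by simp
      ultimately show "g \<in> (\<Union>r\<in>{..<p}. H #> (y [^] r))" by blast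
    qed
    have "card K \<le> card (\<Union>r\<in>{..<p}. H #> (y [^] r))"
      using KU by (intro card_mono) (auto intro!: finite_UN_I rcosets_finite[OF _ Hc finH] rcosetsI[OF Hc] simp: y(1))
    also have "\<dots> \<le> (\<Sum>r\<in>{..<p}. card (H #> (y [^] r)))" by (rule card_UN_le) simp
    also have "\<dots> = (\<Sum>r\<in>{..<p}. card H)"
    proof (rule sum.cong[OF refl])
      fix r :: nat
      have "y [^] r \<in> carrier G" using y(1) by simp
      thus "card (H #> y [^] r) = card H" using card_rcosets_equal[OF rcosetsI[OF Hc] Hc] by metis
    qed
    also have "\<dots> = p ^ Suc e" using e(2) by simp
    also have "\<dots> < p ^ m" using em2 pow_lt_iff by blast
    finally have "card K < card (carrier G)" using cardG by simp
    hence "K \<noteq> carrier G" by blast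
    hence "K = H" using mx[OF Ksub HK] by blast
    thus False using yK y(2) by blast
  qed
qed

end

context pg begin

lemma case1_card:
  assumes no: "\<not> (\<exists>H. maximal_subgroup H G \<and> abelian_set H G)"
    and g: "g \<in> carrier G" "g \<notin> group_center G"
  shows "card (cent g) = p ^ (m - 2)"
proof (rule ccontr)
  assume "card (cent g) \<noteq> p ^ (m - 2)"
  hence c: "card (cent g) = p ^ (m - 1)" using cent_card[OF g] by blast
  have "maximal_subgroup (cent g) G" by (rule max_of_card[OF cent_sub[OF g(1)] c])
  moreover have "abelian_set (cent g) G" unfolding abelian_set_def using cent_abelian[OF g] by blast
  ultimately show False using no by blast
qed

context
  fixes H assumes HM: "maximal_subgroup H G" and Hab: "abelian_set H G"
begin

lemma H_sub: "subgroup H G" using HM unfolding maximal_subgroup_def by blast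
lemma H_ne: "H \<noteq> carrier G" using HM unfolding maximal_subgroup_def by blast
lemma H_max: "subgroup K G \<Longrightarrow> H \<subseteq> K \<Longrightarrow> K \<noteq> carrier G \<Longrightarrow> K = H"
  using HM unfolding maximal_subgroup_def by blast
lemma H_card: "card H = p ^ (m - 1)" using max_index[OF HM] .
lemma H_c: "H \<subseteq> carrier G" using subgroup.subset[OF H_sub] .
lemma H_comm: "x \<in> H \<Longrightarrow> y \<in> H \<Longrightarrow> x \<otimes> y = y \<otimes> x" using Hab unfolding abelian_set_def by blast

lemma H_cent_sub: assumes y: "y \<in> H" shows "H \<subseteq> cent y"
proof
  fix h assume h: "h \<in> H"
  have "h \<otimes> y = y \<otimes> h" by (rule H_comm[OF h y])
  thus "h \<in> cent y" using h H_c unfolding cent_mem by blast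
qed

lemma Z_H: "group_center G \<subseteq> H"
proof -
  define T where "T = cz G H"
  have Tsub: "subgroup T G" unfolding T_def using cz_subgroup[OF H_c] .
  have HT: "H \<subseteq> T" unfolding T_def cz_def using H_c H_comm by blast
  have ZT: "group_center G \<subseteq> T" unfolding T_def cz_def group_center_def using H_c by blast
  show ?thesis
  proof (cases "T = carrier G")
    case True
    have "H \<subseteq> group_center G"
    proof
      fix h assume h: "h \<in> H"
      have "h \<otimes> g = g \<otimes> h" if "g \<in> carrier G" for g
      proof -
        have "g \<in> T" using True that by simp
        hence "g \<otimes> h = h \<otimes> g" using h unfolding T_def cz_def by blast
        thus ?thesis by simp
      qed
      thus "h \<in> group_center G" using h H_c unfolding Z_mem by blast
    qed
    hence "card H \<le> card (group_center G)"
      using card_mono[OF sub_fin[OF Z_sub]] by blast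
    hence "p ^ (m - 1) \<le> p ^ (m - 3)" using H_card cardZ by simp
    hence "m - 1 \<le> m - 3" using pow_le_iff by blast
    thus ?thesis using m_ge3 by linarith
  next
    case False
    hence "T = H" using H_max[OF Tsub HT] by blast
    thus ?thesis using ZT by blast
  qed
qed

lemma H_in_card: assumes x: "x \<in> H" "x \<notin> group_center G" shows "card (cent x) = p ^ (m - 1)"
proof -
  have xc: "x \<in> carrier G" using x H_c by blast
  have "cent x = H" using H_max[OF cent_sub[OF xc] H_cent_sub[OF x(1)] cent_proper[OF xc x(2)]] .
  thus ?thesis using H_card by simp
qed

lemma card_rcH: "card (rcosets H) = p"
proof -
  have e: "m = Suc (m - 1)" using m_ge3 by simp
  have "p ^ m = p ^ (m - 1) * p" by (subst e) (simp only: power_Suc2 diff_Suc_1)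
  hence "card (rcosets H) * p ^ (m - 1) = p ^ (m - 1) * p" using lagrange[OF H_sub] H_card ordG by simp
  thus ?thesis using p_gt1 by simp
qed

lemma H_out_card: assumes g: "g \<in> carrier G" "g \<notin> H" shows "card (cent g) = p ^ (m - 2)"
proof (rule ccontr)
  have gZ: "g \<notin> group_center G" using g Z_H by blast
  let ?M = "cent g"
  assume "card ?M \<noteq> p ^ (m - 2)"
  hence cM: "card ?M = p ^ (m - 1)" using cent_card[OF g(1) gZ] by blast
  have Msub: "subgroup ?M G" using cent_sub[OF g(1)] .
  have Mc: "?M \<subseteq> carrier G" using subgroup.subset[OF Msub] .
  have Mab: "\<And>x y. x \<in> ?M \<Longrightarrow> y \<in> ?M \<Longrightarrow> x \<otimes> y = y \<otimes> x" using cent_abelian[OF g(1) gZ] by blast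
  have HMZ: "H \<inter> ?M \<subseteq> group_center G"
  proof
    fix y assume y: "y \<in> H \<inter> ?M"
    have yc: "y \<in> carrier G" using y H_c by blast
    show "y \<in> group_center G"
    proof (rule ccontr)
      assume yZ: "y \<notin> group_center G"
      have yH: "y \<in> H" and yM: "y \<in> ?M" using y by auto
      have "cent y = H" by (rule H_max[OF cent_sub[OF yc] H_cent_sub[OF yH] cent_proper[OF yc yZ]])
      moreover have "?M \<subseteq> cent y"
      proof
        fix h assume h: "h \<in> ?M"
        have "h \<otimes> y = y \<otimes> h" by (rule Mab[OF h yM])
        thus "h \<in> cent y" using h Mc unfolding cent_mem by blast
      qed
      ultimately show False using self_cent[OF g(1)] g(2) by blast
    qed
  qed
  have finZ: "finite (group_center G)" using sub_fin[OF Z_sub] .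
  have Zc: "group_center G \<subseteq> carrier G" using subgroup.subset[OF Z_sub] .
  have piece: "card (?M \<inter> C) \<le> card (group_center G)" if C: "C \<in> rcosets H" for C
  proof (cases "?M \<inter> C = {}")
    case True thus ?thesis by simp
  next
    case False
    then obtain b0 where b0: "b0 \<in> ?M" "b0 \<in> C" by blast
    obtain a where a: "a \<in> carrier G" "C = H #> a" using C unfolding RCOSETS_def by blast
    have b0c: "b0 \<in> carrier G" using b0 Mc by blast
    have "?M \<inter> C \<subseteq> group_center G #> b0"
    proof
      fix b assume b: "b \<in> ?M \<inter> C"
      have bc: "b \<in> carrier G" using b Mc by blast
      have 1: "b \<otimes> inv a \<in> H" using subgroup.rcos_module_imp[OF H_sub is_group a(1)] b a by blast
      have 2: "b0 \<otimes> inv a \<in> H" using subgroup.rcos_module_imp[OF H_sub is_group a(1)] b0 a by blast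
      have "(b \<otimes> inv a) \<otimes> inv (b0 \<otimes> inv a) \<in> H"
        using subgroup.m_closed[OF H_sub 1 subgroup.m_inv_closed[OF H_sub 2]] .
      moreover have "(b \<otimes> inv a) \<otimes> inv (b0 \<otimes> inv a) = b \<otimes> inv b0"
        using a(1) bc b0c by (simp add: inv_mult_group m_assoc)
      ultimately have "b \<otimes> inv b0 \<in> H" by simp
      moreover have "b \<otimes> inv b0 \<in> ?M"
        using subgroup.m_closed[OF Msub _ subgroup.m_inv_closed[OF Msub b0(1)]] b by blast
      ultimately have "b \<otimes> inv b0 \<in> group_center G" using HMZ by blast
      thus "b \<in> group_center G #> b0" using subgroup.rcos_module_rev[OF Z_sub is_group b0c bc] by blast
    qed
    moreover have "finite (group_center G #> b0)" using rcosets_finite[OF rcosetsI[OF Zc b0c] Zc finZ] .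
    ultimately have "card (?M \<inter> C) \<le> card (group_center G #> b0)" by (rule card_mono[rotated])
    also have "\<dots> = card (group_center G)" using card_rcosets_equal[OF rcosetsI[OF Zc b0c] Zc] by simp
    finally show ?thesis .
  qed
  have finR: "finite (rcosets H)" using rcosets_subset_PowG[OF H_sub] fin by (meson finite_Pow_iff finite_subset)
  have "?M = (\<Union>C\<in>rcosets H. ?M \<inter> C)" using rcosets_part_G[OF H_sub] Mc by blast
  hence "card ?M \<le> (\<Sum>C\<in>rcosets H. card (?M \<inter> C))" using card_UN_le[OF finR] by metis
  also have "\<dots> \<le> (\<Sum>C\<in>rcosets H. card (group_center G))" by (rule sum_mono) (rule piece)
  also have "\<dots> = p * p ^ (m - 3)" using card_rcH cardZ by simp
  also have "\<dots> = p ^ (m - 2)"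
  proof -
    have "m - 2 = Suc (m - 3)" using m_ge3 by simp
    thus ?thesis by (simp only: power_Suc)
  qed
  also have "\<dots> < p ^ (m - 1)" using pow_lt_iff m_ge3 by simp
  finally show False using cM by simp
qed

end
end

definition ct :: "('a, 'b) monoid_scheme \<Rightarrow> 'a set \<Rightarrow> nat \<Rightarrow> (nat \<Rightarrow> 'a) set" where
  "ct G S n = {x \<in> {..<n} \<rightarrow>\<^sub>E S. \<forall>i<n. \<forall>j<n. x i \<otimes>\<^bsub>G\<^esub> x j = x j \<otimes>\<^bsub>G\<^esub> x i}"

lemma comm_tuples_ct: "comm_tuples G n = ct G (carrier G) n"
  unfolding comm_tuples_def ct_def ..

lemma ct_abelian:
  assumes "\<And>x y. x \<in> S \<Longrightarrow> y \<in> S \<Longrightarrow> x \<otimes>\<^bsub>G\<^esub> y = y \<otimes>\<^bsub>G\<^esub> x" and "finite S"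
  shows "card (ct G S n) = card S ^ n"
proof -
  have "x i \<otimes>\<^bsub>G\<^esub> x j = x j \<otimes>\<^bsub>G\<^esub> x i" if "x \<in> {..<n} \<rightarrow>\<^sub>E S" "i < n" "j < n" for x i j
    using assms(1)[OF PiE_mem[OF that(1)] PiE_mem[OF that(1)]] that by simp
  hence "ct G S n = {..<n} \<rightarrow>\<^sub>E S" unfolding ct_def by blast
  thus ?thesis by (simp add: card_PiE)
qed

lemma ct_mono: "S \<subseteq> T \<Longrightarrow> ct G S n \<subseteq> ct G T n"
  unfolding ct_def by (auto simp: PiE_iff)

lemma ct_finite: "finite S \<Longrightarrow> finite (ct G S n)"
  unfolding ct_def by (rule finite_subset[of _ "{..<n} \<rightarrow>\<^sub>E S"]) (auto intro: finite_PiE)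

context pg begin

lemma cancel_a1 [simp]: "x \<in> carrier G \<Longrightarrow> y \<in> carrier G \<Longrightarrow> inv x \<otimes> (x \<otimes> y) = y"
  by (simp add: m_assoc[symmetric])
lemma cancel_a2 [simp]: "x \<in> carrier G \<Longrightarrow> y \<in> carrier G \<Longrightarrow> x \<otimes> (inv x \<otimes> y) = y"
  by (simp add: m_assoc[symmetric])

lemma conj_mem: "g \<in> carrier G \<Longrightarrow> x \<in> carrier G \<Longrightarrow> g \<otimes> x \<otimes> inv g = x \<longleftrightarrow> x \<in> cent g"
proof -
  assume g: "g \<in> carrier G" and x: "x \<in> carrier G"
  have "g \<otimes> x \<otimes> inv g = x \<longleftrightarrow> g \<otimes> x \<otimes> inv g \<otimes> g = x \<otimes> g"
    using g x by (metis inv_closed m_closed r_cancel)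
  also have "\<dots> \<longleftrightarrow> g \<otimes> x = x \<otimes> g" using g x by (simp add: m_assoc)
  finally show ?thesis unfolding cent_mem using x by auto
qed

lemma burnside_beta:
  "beta G n * order G = (\<Sum>g\<in>carrier G. card (ct G (cent g) n))"
proof -
  define E where "E = comm_tuples G n"
  define \<phi> where "\<phi> = (\<lambda>g. restrict (conj_tuple G n g) E)"
  have Ec: "x \<in> E \<longleftrightarrow> x \<in> {..<n} \<rightarrow>\<^sub>E carrier G \<and> (\<forall>i<n. \<forall>j<n. x i \<otimes> x j = x j \<otimes> x i)" for x
    unfolding E_def comm_tuples_def by simp
  have conj_in: "conj_tuple G n g x \<in> E" if g: "g \<in> carrier G" and x: "x \<in> E" for g x
  proof -
    have xc: "\<And>i. i < n \<Longrightarrow> x i \<in> carrier G" using x unfolding Ec by auto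
    have xx: "\<And>i j. i < n \<Longrightarrow> j < n \<Longrightarrow> x i \<otimes> x j = x j \<otimes> x i" using x unfolding Ec by auto
    have "(g \<otimes> x i \<otimes> inv g) \<otimes> (g \<otimes> x j \<otimes> inv g) = (g \<otimes> x j \<otimes> inv g) \<otimes> (g \<otimes> x i \<otimes> inv g)"
      if "i < n" "j < n" for i j
    proof -
      have "(g \<otimes> x i \<otimes> inv g) \<otimes> (g \<otimes> x j \<otimes> inv g) = g \<otimes> (x i \<otimes> x j) \<otimes> inv g"
        using g xc that by (simp add: m_assoc)
      also have "\<dots> = g \<otimes> (x j \<otimes> x i) \<otimes> inv g" using xx that by simp
      also have "\<dots> = (g \<otimes> x j \<otimes> inv g) \<otimes> (g \<otimes> x i \<otimes> inv g)"
        using g xc that by (simp add: m_assoc)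
      finally show ?thesis .
    qed
    thus ?thesis unfolding Ec conj_tuple_def using g xc by auto
  qed
  have act: "group_action G E \<phi>"
  proof (rule group_action_intro[OF is_group])
    show "\<phi> g \<in> extensional E" for g unfolding \<phi>_def by simp
    show "\<phi> g x \<in> E" if "g \<in> carrier G" "x \<in> E" for g x
      unfolding \<phi>_def using that conj_in by simp
    show "\<phi> (g \<otimes> h) x = \<phi> g (\<phi> h x)" if gh: "g \<in> carrier G" "h \<in> carrier G" and x: "x \<in> E" for g h x
    proof -
      have xc: "\<And>i. i < n \<Longrightarrow> x i \<in> carrier G" using x unfolding Ec by auto
      have "\<phi> g (\<phi> h x) = conj_tuple G n g (conj_tuple G n h x)"
        unfolding \<phi>_def using conj_in gh x by simp
      also have "\<dots> = conj_tuple G n (g \<otimes> h) x"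
        unfolding conj_tuple_def using gh xc by (auto simp: inv_mult_group m_assoc)
      finally show ?thesis unfolding \<phi>_def using x gh by simp
    qed
    show "\<phi> \<one> x = x" if x: "x \<in> E" for x
    proof -
      have xc: "\<And>i. i < n \<Longrightarrow> x i \<in> carrier G" using x unfolding Ec by auto
      have "\<phi> \<one> x = restrict x {..<n}" unfolding \<phi>_def conj_tuple_def using x xc by auto
      also have "\<dots> = x" using x unfolding Ec by auto
      finally show ?thesis .
    qed
  qed
  interpret A: group_action G E \<phi> by (rule act)
  have finE: "finite E" unfolding E_def comm_tuples_ct by (rule ct_finite[OF fin])
  have orbs: "orbits G E \<phi> = conj_orbit G n ` comm_tuples G n"
  proof -
    have "orbit G \<phi> x = conj_orbit G n x" if "x \<in> E" for x
      unfolding orbit_def conj_orbit_def \<phi>_def using that by auto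
    thus ?thesis unfolding orbits_def E_def by auto
  qed
  have inv: "invariants E \<phi> g = ct G (cent g) n" if g: "g \<in> carrier G" for g
  proof
    show "invariants E \<phi> g \<subseteq> ct G (cent g) n"
    proof
      fix x assume x: "x \<in> invariants E \<phi> g"
      hence xE: "x \<in> E" and fx: "conj_tuple G n g x = x" unfolding invariants_def \<phi>_def by auto
      have xc: "\<And>i. i < n \<Longrightarrow> x i \<in> carrier G" using xE unfolding Ec by auto
      have "x i \<in> cent g" if i: "i < n" for i
      proof -
        have "conj_tuple G n g x i = x i" using fx by simp
        hence "g \<otimes> x i \<otimes> inv g = x i" unfolding conj_tuple_def using i by simp
        thus ?thesis using conj_mem[OF g xc[OF i]] by simp
      qed
      thus "x \<in> ct G (cent g) n" using xE unfolding Ec ct_def by (auto simp: PiE_iff)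
    qed
    show "ct G (cent g) n \<subseteq> invariants E \<phi> g"
    proof
      fix x assume x: "x \<in> ct G (cent g) n"
      have xE: "x \<in> E" using x ct_mono[of "cent g" "carrier G" G n] cent_sub[OF g] subgroup.subset
        unfolding E_def comm_tuples_ct by blast
      have xi: "\<And>i. i < n \<Longrightarrow> x i \<in> cent g" using x unfolding ct_def by auto
      have xext: "x \<in> extensional {..<n}" using x unfolding ct_def by (auto simp: PiE_iff)
      have "conj_tuple G n g x = x"
      proof (rule extensionalityI[OF _ xext])
        show "conj_tuple G n g x \<in> extensional {..<n}" unfolding conj_tuple_def by simp
        show "conj_tuple G n g x i = x i" if i: "i \<in> {..<n}" for i
          using conj_mem[OF g] xi[of i] i unfolding conj_tuple_def cent_mem by auto
      qed
      thus "x \<in> invariants E \<phi> g" unfolding invariants_def \<phi>_def using xE by simp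
    qed
  qed
  have "beta G n * order G = card (orbits G E \<phi>) * order G" unfolding beta_def orbs ..
  also have "\<dots> = (\<Sum>g\<in>carrier G. card (invariants E \<phi> g))" by (rule A.burnside[OF fin finE])
  also have "\<dots> = (\<Sum>g\<in>carrier G. card (ct G (cent g) n))" using inv by simp
  finally show ?thesis .
qed

lemma ct_suc:
  "card (ct G (carrier G) (Suc n)) = (\<Sum>g\<in>carrier G. card (ct G (cent g) n))"
proof -
  let ?A = "ct G (carrier G) (Suc n)"
  let ?B = "Sigma (carrier G) (\<lambda>g. ct G (cent g) n)"
  define f where "f = (\<lambda>x::nat \<Rightarrow> 'a. (x n, restrict x {..<n}))"
  define h where "h = (\<lambda>(g::'a, y::nat \<Rightarrow> 'a). y(n := g))"
  have "bij_betw f ?A ?B"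
  proof (rule bij_betw_byWitness[where f' = h])
    show "\<forall>x\<in>?A. h (f x) = x"
    proof
      fix x assume x: "x \<in> ?A"
      have xe: "x \<in> extensional {..<Suc n}" using x unfolding ct_def by (auto simp: PiE_iff)
      have "(restrict x {..<n})(n := x n) = x"
      proof
        fix i show "((restrict x {..<n})(n := x n)) i = x i"
        proof (cases "i = n")
          case True thus ?thesis by simp
        next
          case False
          show ?thesis
          proof (cases "i < n")
            case True thus ?thesis using False by simp
          next
            case F2: False
            have "i \<notin> {..<Suc n}" using False F2 by simp
            hence "x i = undefined" by (rule extensional_arb[OF xe])
            thus ?thesis using False F2 by simp
          qed
        qed
      qed
      thus "h (f x) = x" unfolding h_def f_def by simp
    qed
    show "\<forall>z\<in>?B. f (h z) = z"
    proof
      fix z assume z: "z \<in> ?B"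
      obtain g y where gy: "z = (g, y)" "g \<in> carrier G" "y \<in> ct G (cent g) n" using z by auto
      have ye: "y \<in> extensional {..<n}" using gy unfolding ct_def by (auto simp: PiE_iff)
      have "restrict (y(n := g)) {..<n} = y"
      proof
        fix i show "restrict (y(n := g)) {..<n} i = y i"
        proof (cases "i < n")
          case True thus ?thesis by simp
        next
          case False
          have "i \<notin> {..<n}" using False by simp
          hence "y i = undefined" by (rule extensional_arb[OF ye])
          thus ?thesis using False by simp
        qed
      qed
      thus "f (h z) = z" unfolding f_def h_def gy by simp
    qed
    show "f ` ?A \<subseteq> ?B"
    proof
      fix w assume "w \<in> f ` ?A"
      then obtain x where x: "x \<in> ?A" "w = f x" by blast
      have xc: "\<And>i. i < Suc n \<Longrightarrow> x i \<in> carrier G" and xx: "\<And>i j. i < Suc n \<Longrightarrow> j < Suc n \<Longrightarrow> x i \<otimes> x j = x j \<otimes> x i"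
        using x(1) unfolding ct_def by auto
      have "restrict x {..<n} \<in> {..<n} \<rightarrow>\<^sub>E cent (x n)"
      proof (rule restrict_PiE_iff[THEN iffD2], intro ballI)
        fix i assume "i \<in> {..<n}"
        hence i: "i < n" by simp
        have "x i \<otimes> x n = x n \<otimes> x i" using xx[of i n] i by simp
        thus "x i \<in> cent (x n)" unfolding cent_mem using xc[of i] i by simp
      qed
      moreover have "\<forall>i<n. \<forall>j<n. restrict x {..<n} i \<otimes> restrict x {..<n} j = restrict x {..<n} j \<otimes> restrict x {..<n} i"
        using xx by simp
      ultimately have "restrict x {..<n} \<in> ct G (cent (x n)) n" unfolding ct_def by blast
      thus "w \<in> ?B" using x(2) xc[of n] unfolding f_def by auto
    qed
    show "h ` ?B \<subseteq> ?A"
    proof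
      fix w assume "w \<in> h ` ?B"
      then obtain g y where gy: "g \<in> carrier G" "y \<in> ct G (cent g) n" "w = y(n := g)" unfolding h_def by auto
      have yc: "\<And>i. i < n \<Longrightarrow> y i \<in> cent g" and yy: "\<And>i j. i < n \<Longrightarrow> j < n \<Longrightarrow> y i \<otimes> y j = y j \<otimes> y i"
        and ye: "y \<in> extensional {..<n}"
        using gy(2) unfolding ct_def by (auto simp: PiE_iff)
      have yc2: "\<And>i. i < n \<Longrightarrow> y i \<in> carrier G" and yg: "\<And>i. i < n \<Longrightarrow> y i \<otimes> g = g \<otimes> y i"
        using yc unfolding cent_mem by auto
      have wi: "w i = (if i = n then g else y i)" for i unfolding gy(3) by simp
      have wc: "w i \<in> carrier G" if "i < Suc n" for i
        using that gy(1) yc2[of i] unfolding wi by (cases "i = n") auto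
      have we: "w i = undefined" if "i \<notin> {..<Suc n}" for i
      proof -
        have "i \<noteq> n" "i \<notin> {..<n}" using that by auto
        thus ?thesis unfolding wi using extensional_arb[OF ye] by simp
      qed
      have "w \<in> {..<Suc n} \<rightarrow>\<^sub>E carrier G"
        unfolding PiE_iff extensional_def using wc we by auto
      moreover have "w i \<otimes> w j = w j \<otimes> w i" if "i < Suc n" "j < Suc n" for i j
      proof (cases "i = n")
        case True
        show ?thesis
        proof (cases "j = n")
          case True thus ?thesis using \<open>i = n\<close> by simp
        next
          case False
          hence "j < n" using that by simp
          thus ?thesis unfolding wi using True False yg[of j] by simp
        qed
      next
        case False
        hence i: "i < n" using that by simp
        show ?thesis
        proof (cases "j = n")
          case True thus ?thesis unfolding wi using False yg[OF i] by simp
        next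
          case F2: False
          hence "j < n" using that by simp
          thus ?thesis unfolding wi using False F2 yy[OF i] by simp
        qed
      qed
      ultimately show "w \<in> ?A" unfolding ct_def by auto
    qed
  qed
  hence "card ?A = card ?B" by (rule bij_betw_same_card)
  also have "\<dots> = (\<Sum>g\<in>carrier G. card (ct G (cent g) n))"
  proof -
    have "\<forall>g\<in>carrier G. finite (ct G (cent g) n)" by (simp add: ct_finite sub_fin cent_sub)
    thus ?thesis by (rule card_SigmaI[OF fin])
  qed
  finally show ?thesis .
qed

end

lemma coeff_lin: "((1 - fps_const (c::rat) * fps_X) * F) $ n = F $ n - (if n = 0 then 0 else c * F $ (n - 1))"
proof -
  have "(1 - fps_const c * fps_X) * F = F - fps_const c * (fps_X * F)" by (simp add: algebra_simps)
  thus ?thesis by (simp add: fps_X_mult_nth)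
qed

lemma coeff_cX: "(fps_const (u::rat) * fps_X * F) $ n = (if n = 0 then 0 else u * F $ (n - 1))"
proof -
  have eq: "fps_const u * fps_X * F = fps_const u * (fps_X * F)" by (simp add: mult.assoc)
  show ?thesis unfolding eq by (simp add: fps_X_mult_nth)
qed

lemma D0: "(1 - fps_const (c::rat) * fps_X) $ 0 \<noteq> 0" by simp

lemma geo: "inverse (1 - fps_const (c::rat) * fps_X) = Abs_fps (\<lambda>n. c ^ n)"
proof (rule fps_inverse_unique)
  show "(1 - fps_const c * fps_X) * Abs_fps (\<lambda>n. c ^ n) = 1"
  proof (rule fps_ext)
    fix n show "((1 - fps_const c * fps_X) * Abs_fps (\<lambda>n. c ^ n)) $ n = (1 :: rat fps) $ n"
      unfolding coeff_lin by (cases n) simp_all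
  qed
qed

lemma div_unit: "(a :: rat fps) / (1 - fps_const c * fps_X) = a * inverse (1 - fps_const c * fps_X)"
  by (rule fps_divide_unit) simp

lemma rec_fps:
  fixes b c :: "nat \<Rightarrow> rat"
  assumes b0: "b 0 = 1" and bs: "\<And>n. b (Suc n) = q * b n + c (Suc n)"
  shows "Abs_fps b = inverse (1 - fps_const q * fps_X) * Abs_fps (\<lambda>n. if n = 0 then 1 else c n)"
proof -
  let ?D = "1 - fps_const q * fps_X"
  let ?K = "Abs_fps (\<lambda>n. if n = 0 then 1 else c n)"
  have DB: "?D * Abs_fps b = ?K"
  proof (rule fps_ext)
    fix n show "(?D * Abs_fps b) $ n = ?K $ n"
      unfolding coeff_lin using b0 bs by (cases n) simp_all
  qed
  have "Abs_fps b = (inverse ?D * ?D) * Abs_fps b" using inverse_mult_eq_1[OF D0[of q]] by simp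
  also have "\<dots> = inverse ?D * ?K" using DB by (simp add: mult.assoc)
  finally show ?thesis .
qed

lemma case1_fps:
  fixes b :: "nat \<Rightarrow> rat"
  assumes b0: "b 0 = 1" and bs: "\<And>n. b (Suc n) = q * b n + k * r ^ Suc n"
    and A: "r - A = k * r"
  shows "Abs_fps b = (1 - fps_const A * fps_X) /
             ((1 - fps_const r * fps_X) * (1 - fps_const q * fps_X))"
proof -
  let ?N = "1 - fps_const A * fps_X"
  let ?K = "Abs_fps (\<lambda>n. if n = 0 then 1 else k * r ^ n)"
  have B: "Abs_fps b = inverse (1 - fps_const q * fps_X) * ?K"
    using rec_fps[of b q "\<lambda>n. k * r ^ n", OF b0 bs] .
  have K: "?K = ?N * Abs_fps (\<lambda>n. r ^ n)"
  proof (rule fps_ext)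
    fix n show "?K $ n = (?N * Abs_fps (\<lambda>n. r ^ n)) $ n"
    proof (cases n)
      case 0 thus ?thesis unfolding coeff_lin by simp
    next
      case (Suc j)
      have A': "A = r - k * r" using A by simp
      show ?thesis unfolding coeff_lin using Suc by (simp add: A' algebra_simps)
    qed
  qed
  have "(1 - fps_const A * fps_X) / ((1 - fps_const r * fps_X) * (1 - fps_const q * fps_X))
      = ?N * inverse ((1 - fps_const r * fps_X) * (1 - fps_const q * fps_X))"
    by (rule fps_divide_unit) simp
  also have "\<dots> = ?N * Abs_fps (\<lambda>n. r ^ n) * inverse (1 - fps_const q * fps_X)"
    by (simp add: fps_inverse_mult geo mult.assoc)
  finally show ?thesis using B K by (simp add: mult.commute)
qed

lemma case2_fps:
  fixes b :: "nat \<Rightarrow> rat"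
  assumes b0: "b 0 = 1" and bs: "\<And>n. b (Suc n) = q * b n + (u * P ^ n + v * r ^ n)"
  shows "Abs_fps b = (1 / (1 - fps_const q * fps_X)) *
             (1 + fps_const u * fps_X / (1 - fps_const P * fps_X)
                + fps_const v * fps_X / (1 - fps_const r * fps_X))"
proof -
  let ?K = "Abs_fps (\<lambda>n. if n = 0 then 1 else u * P ^ (n - 1) + v * r ^ (n - 1))"
  have B: "Abs_fps b = inverse (1 - fps_const q * fps_X) * ?K"
    using rec_fps[of b q "\<lambda>n. u * P ^ (n - 1) + v * r ^ (n - 1)"] b0 bs by simp
  have K: "?K = 1 + fps_const u * fps_X * Abs_fps (\<lambda>n. P ^ n) + fps_const v * fps_X * Abs_fps (\<lambda>n. r ^ n)"
  proof (rule fps_ext)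
    fix n show "?K $ n = (1 + fps_const u * fps_X * Abs_fps (\<lambda>n. P ^ n) + fps_const v * fps_X * Abs_fps (\<lambda>n. r ^ n)) $ n"
      by (cases n) (simp_all add: coeff_cX)
  qed
  show ?thesis unfolding div_unit geo B K by simp
qed


context pg begin

definition Sn :: "nat \<Rightarrow> nat" where "Sn n = (\<Sum>g\<in>carrier G - group_center G. card (cent g) ^ n)"

lemma a_rec: "card (ct G (carrier G) (Suc n)) = p ^ (m - 3) * card (ct G (carrier G) n) + Sn n"
proof -
  let ?Z = "group_center G"
  let ?f = "\<lambda>g. card (ct G (cent g) n)"
  have Zc: "?Z \<subseteq> carrier G" using subgroup.subset[OF Z_sub] .
  have "card (ct G (carrier G) (Suc n)) = (\<Sum>g\<in>carrier G. ?f g)" by (rule ct_suc)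
  also have "\<dots> = (\<Sum>g\<in>carrier G - ?Z. ?f g) + (\<Sum>g\<in>?Z. ?f g)" by (rule sum.subset_diff[OF Zc fin])
  also have "(\<Sum>g\<in>?Z. ?f g) = (\<Sum>g\<in>?Z. card (ct G (carrier G) n))"
    by (rule sum.cong[OF refl]) (simp add: cent_central)
  also have "\<dots> = p ^ (m - 3) * card (ct G (carrier G) n)" using cardZ by simp
  also have "(\<Sum>g\<in>carrier G - ?Z. ?f g) = Sn n" unfolding Sn_def
  proof (rule sum.cong[OF refl])
    fix g assume g: "g \<in> carrier G - ?Z"
    hence gc: "g \<in> carrier G" and gZ: "g \<notin> ?Z" by auto
    show "?f g = card (cent g) ^ n"
      by (rule ct_abelian[OF cent_abelian[OF gc gZ] sub_fin[OF cent_sub[OF gc]]])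
  qed
  finally show ?thesis by simp
qed

lemma beta_eq: "beta G n * p ^ m = card (ct G (carrier G) (Suc n))"
  using burnside_beta[of n] ct_suc[of n] ordG by simp

lemma beta0: "beta G 0 = 1"
proof -
  have "comm_tuples G 0 = {\<lambda>_. undefined}" unfolding comm_tuples_def by simp
  thus ?thesis unfolding beta_def by simp
qed

lemma beta_suc_rat:
  "(of_nat (beta G (Suc n)) :: rat) =
     of_nat p ^ (m - 3) * of_nat (beta G n) + of_nat (Sn (Suc n)) / of_nat p ^ m"
proof -
  have "beta G (Suc n) * p ^ m = p ^ (m - 3) * (beta G n * p ^ m) + Sn (Suc n)"
    using beta_eq[of "Suc n"] a_rec[of "Suc n"] beta_eq[of n] by simp
  hence "(of_nat (beta G (Suc n)) :: rat) * of_nat p ^ m =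
          of_nat p ^ (m - 3) * (of_nat (beta G n) * of_nat p ^ m) + of_nat (Sn (Suc n))"
    by (metis of_nat_add of_nat_mult of_nat_power)
  moreover have "(of_nat p :: rat) ^ m \<noteq> 0" using p_gt1 by simp
  ultimately show ?thesis by (simp add: field_simps)
qed

lemma cardNC: "card (carrier G - group_center G) = p ^ m - p ^ (m - 3)"
  using card_Diff_subset[OF sub_fin[OF Z_sub] subgroup.subset[OF Z_sub]] cardG cardZ by simp

lemma pm3_le: "p ^ (m - 3) \<le> p ^ m" using pow_le_iff by simp

lemma Sn_case1:
  assumes no: "\<not> (\<exists>H. maximal_subgroup H G \<and> abelian_set H G)"
  shows "(of_nat (Sn n) :: rat) = (of_nat p ^ m - of_nat p ^ (m - 3)) * (of_nat p ^ (m - 2)) ^ n"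
proof -
  have "Sn n = (\<Sum>g\<in>carrier G - group_center G. (p ^ (m - 2)) ^ n)" unfolding Sn_def
    by (rule sum.cong[OF refl]) (simp add: case1_card[OF no])
  also have "\<dots> = (p ^ m - p ^ (m - 3)) * (p ^ (m - 2)) ^ n" using cardNC by simp
  finally show ?thesis using pm3_le by (simp add: of_nat_diff)
qed

lemma Sn_case2:
  assumes HM: "maximal_subgroup H G" and Hab: "abelian_set H G"
  shows "(of_nat (Sn n) :: rat) = (of_nat p ^ (m - 1) - of_nat p ^ (m - 3)) * (of_nat p ^ (m - 1)) ^ n
            + (of_nat p ^ m - of_nat p ^ (m - 1)) * (of_nat p ^ (m - 2)) ^ n"
proof -
  let ?Z = "group_center G"
  have Hc: "H \<subseteq> carrier G" using H_c[OF HM Hab] .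
  have ZH: "?Z \<subseteq> H" using Z_H[OF HM Hab] .
  have finH: "finite H" using finite_subset[OF Hc fin] .
  have split: "carrier G - ?Z = (H - ?Z) \<union> (carrier G - H)" using Hc ZH by blast
  have "Sn n = (\<Sum>g\<in>H - ?Z. card (cent g) ^ n) + (\<Sum>g\<in>carrier G - H. card (cent g) ^ n)"
    unfolding Sn_def split by (rule sum.union_disjoint) (use finH fin in auto)
  also have "(\<Sum>g\<in>H - ?Z. card (cent g) ^ n) = (\<Sum>g\<in>H - ?Z. (p ^ (m - 1)) ^ n)"
    by (rule sum.cong[OF refl]) (simp add: H_in_card[OF HM Hab])
  also have "\<dots> = (p ^ (m - 1) - p ^ (m - 3)) * (p ^ (m - 1)) ^ n"
    using card_Diff_subset[OF sub_fin[OF Z_sub] ZH] H_card[OF HM Hab] cardZ by simp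
  also have "(\<Sum>g\<in>carrier G - H. card (cent g) ^ n) = (\<Sum>g\<in>carrier G - H. (p ^ (m - 2)) ^ n)"
    by (rule sum.cong[OF refl]) (simp add: H_out_card[OF HM Hab])
  also have "\<dots> = (p ^ m - p ^ (m - 1)) * (p ^ (m - 2)) ^ n"
    using card_Diff_subset[OF finH Hc] H_card[OF HM Hab] cardG by simp
  finally have e: "Sn n = (p ^ (m - 1) - p ^ (m - 3)) * (p ^ (m - 1)) ^ n + (p ^ m - p ^ (m - 1)) * (p ^ (m - 2)) ^ n" .
  have l1: "p ^ (m - 3) \<le> p ^ (m - 1)" and l2: "p ^ (m - 1) \<le> p ^ m" using pow_le_iff by simp_all
  show ?thesis unfolding e using l1 l2 by (simp add: of_nat_diff)
qed

end

theorem theorem8p3: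
  fixes G :: "('a, 'b) monoid_scheme" and p m :: nat
  assumes "group G" and "Factorial_Ring.prime p" and "finite (carrier G)"
    and "order G = p ^ m"
    and "card (rcosets\<^bsub>G\<^esub> (group_center G)) = p ^ 3"
  shows "(\<not> (\<exists>H. maximal_subgroup H G \<and> abelian_set H G) \<longrightarrow>
           B_series G =
             (1 - fps_const ((of_nat p :: rat) powi (int m - 5)) * fps_X) /
             ((1 - fps_const ((of_nat p :: rat) powi (int m - 2)) * fps_X) *
              (1 - fps_const ((of_nat p :: rat) powi (int m - 3)) * fps_X)))
       \<and> ((\<exists>H. maximal_subgroup H G \<and> abelian_set H G) \<longrightarrow>
           B_series G =
             (1 / (1 - fps_const ((of_nat p :: rat) powi (int m - 3)) * fps_X)) *
             (1 + fps_const ((of_nat p :: rat) powi (int m - 2) - (of_nat p :: rat) powi (int m - 4)) * fps_X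
                    / (1 - fps_const ((of_nat p :: rat) powi (int m - 1)) * fps_X)
                + fps_const ((of_nat p :: rat) powi (int m - 2) - (of_nat p :: rat) powi (int m - 3)) * fps_X
                    / (1 - fps_const ((of_nat p :: rat) powi (int m - 2)) * fps_X)))"
proof -
  interpret pg G p m using assms by (simp add: pg_def pg_axioms_def)
  define x where "x = (of_nat p :: rat)"
  have x0: "x \<noteq> 0" unfolding x_def using p_gt1 by simp
  obtain k where k: "m = k + 3" using m_ge3 by (metis le_add_diff_inverse2)
  define Q where "Q = x ^ k"
  have Q0: "Q \<noteq> 0" unfolding Q_def using x0 by simp
  have e3: "x powi (int m - 3) = Q" unfolding Q_def k by simp
  have e2: "x powi (int m - 2) = Q * x"
  proof -
    have h: "int m - 2 = int (Suc k)" unfolding k by simp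
    have "x powi (int m - 2) = x ^ Suc k" unfolding h by (rule power_int_of_nat)
    thus ?thesis unfolding Q_def by (simp add: mult.commute)
  qed
  have e1: "x powi (int m - 1) = Q * x ^ 2"
  proof -
    have h: "int m - 1 = int (k + 2)" unfolding k by simp
    have "x powi (int m - 1) = x ^ (k + 2)" unfolding h by (rule power_int_of_nat)
    thus ?thesis unfolding Q_def by (simp add: power_add power2_eq_square)
  qed
  have e4: "x powi (int m - 4) = Q / x"
  proof -
    have "int m - 4 = int k + (-1)" unfolding k by simp
    hence "x powi (int m - 4) = x powi (int k) * x powi (-1)" using power_int_add[of x "int k" "-1"] x0 by simp
    thus ?thesis unfolding Q_def by (simp add: power_int_minus field_simps)
  qed
  have e5: "x powi (int m - 5) = Q / x ^ 2"
  proof -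
    have "int m - 5 = int k + (-2)" unfolding k by simp
    hence "x powi (int m - 5) = x powi (int k) * x powi (-2)" using power_int_add[of x "int k" "-2"] x0 by simp
    moreover have "x powi (-2) = inverse (x ^ 2)" using power_int_minus[of x 2] by simp
    ultimately show ?thesis unfolding Q_def by (simp add: field_simps power2_eq_square power3_eq_cube)
  qed
  have n3: "x ^ (m - 3) = Q" unfolding Q_def k by simp
  have n2: "x ^ (m - 2) = Q * x" unfolding Q_def k by (simp add: mult.commute)
  have n1: "x ^ (m - 1) = Q * x ^ 2" unfolding Q_def k by (simp add: power_add power2_eq_square)
  have n0: "x ^ m = Q * x ^ 3" unfolding Q_def k by (simp add: power_add)
  define b where "b = (\<lambda>n. (of_nat (beta G n) :: rat))"
  have B: "B_series G = Abs_fps b" unfolding B_series_def b_def ..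
  have b0: "b 0 = 1" unfolding b_def using beta0 by simp
  have bs: "b (Suc n) = Q * b n + of_nat (Sn (Suc n)) / x ^ m" for n
    using beta_suc_rat[of n] unfolding b_def x_def[symmetric] n3 .
  show ?thesis
  proof (intro conjI impI)
    assume no: "\<not> (\<exists>H. maximal_subgroup H G \<and> abelian_set H G)"
    have bs1: "b (Suc n) = Q * b n + (1 - 1 / x ^ 3) * (Q * x) ^ Suc n" for n
    proof -
      have "of_nat (Sn (Suc n)) / x ^ m = (Q * x ^ 3 - Q) * (Q * x) ^ Suc n / (Q * x ^ 3)"
        using Sn_case1[OF no, of "Suc n"] unfolding x_def[symmetric] n0 n3 n2 by simp
      also have "\<dots> = (1 - 1 / x ^ 3) * (Q * x) ^ Suc n" using Q0 x0 by (simp add: field_simps power2_eq_square power3_eq_cube)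
      finally show ?thesis using bs[of n] by simp
    qed
    have A: "Q * x - Q / x ^ 2 = (1 - 1 / x ^ 3) * (Q * x)" using x0 by (simp add: field_simps power2_eq_square power3_eq_cube)
    show "B_series G =
             (1 - fps_const ((of_nat p :: rat) powi (int m - 5)) * fps_X) /
             ((1 - fps_const ((of_nat p :: rat) powi (int m - 2)) * fps_X) *
              (1 - fps_const ((of_nat p :: rat) powi (int m - 3)) * fps_X))"
      unfolding B x_def[symmetric] e5 e2 e3 by (rule case1_fps[OF b0 bs1 A])
  next
    assume "\<exists>H. maximal_subgroup H G \<and> abelian_set H G"
    then obtain H where HM: "maximal_subgroup H G" and Hab: "abelian_set H G" by blast
    have bs2: "b (Suc n) = Q * b n + ((Q * x - Q / x) * (Q * x ^ 2) ^ n + (Q * x - Q) * (Q * x) ^ n)" for n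
    proof -
      have "of_nat (Sn (Suc n)) / x ^ m =
          ((Q * x ^ 2 - Q) * (Q * x ^ 2) ^ Suc n + (Q * x ^ 3 - Q * x ^ 2) * (Q * x) ^ Suc n) / (Q * x ^ 3)"
        using Sn_case2[OF HM Hab, of "Suc n"] unfolding x_def[symmetric] n0 n3 n2 n1 by simp
      also have "\<dots> = (Q * x - Q / x) * (Q * x ^ 2) ^ n + (Q * x - Q) * (Q * x) ^ n"
        using Q0 x0 by (simp add: field_simps power_Suc power2_eq_square power3_eq_cube)
      finally show ?thesis using bs[of n] by simp
    qed
    show "B_series G =
             (1 / (1 - fps_const ((of_nat p :: rat) powi (int m - 3)) * fps_X)) *
             (1 + fps_const ((of_nat p :: rat) powi (int m - 2) - (of_nat p :: rat) powi (int m - 4)) * fps_X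
                    / (1 - fps_const ((of_nat p :: rat) powi (int m - 1)) * fps_X)
                + fps_const ((of_nat p :: rat) powi (int m - 2) - (of_nat p :: rat) powi (int m - 3)) * fps_X
                    / (1 - fps_const ((of_nat p :: rat) powi (int m - 2)) * fps_X))"
      unfolding B x_def[symmetric] e4 e3 e2 e1 by (rule case2_fps[OF b0 bs2])
  qed
qed


end
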